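(* Let $n\ge2$, $\rho\in(0,\infty)$, let $\Omega$ be as below, and let $b$ be a multiple of a $(\varphi,\infty,s)$-atom associated with the ball $B_r=\{|x|<r\}$, $r>0$. Then for every $R\in[2r,\infty)$ and every $x\in B_{2R}\setminus B_R$, $$\mu^\rho_\Omega(b)(x)\le\|\Omega\|_{L^1(S^{n-1})}\|b\|_{L^\infty}\frac{1}{\rho}\Big\{\ln\frac{2R+r}{R-r}+\frac{[(2R+r)^\rho-(R-r)^\rho]^2}{2\rho(2R+r)^{2\rho}}\Big\}^{1/2}.$$
   Context: $B_r:=\{x\in\mathbb{R}^n:|x|<r\}$. $\Omega$ is a locally integrable function on $\mathbb{R}^n\setminus\{0\}$, homogeneous of degree zero, with $\int_{S^{n-1}}\Omega\,d\sigma=0$. $\mu^\rho_\Omega(f)(x):=\big(\int_0^\infty|F^\rho_{\Omega,t}(f)(x)|^2\,t^{-2\rho-1}dt\big)^{1/2}$, $F^\rho_{\Omega,t}(f)(x):=\int_{|x-y|\le t}\Omega(x-y)|x-y|^{\rho-n}f(y)\,dy$. $\varphi$ is a growth function: $\varphi:\mathbb{R}^n\times[0,\infty)\to[0,\infty)$, each $\varphi(x,\cdot)$ an Orlicz function, each $\varphi(\cdot,t)$ measurable, $\varphi$ in the uniform Muckenhoupt class $\mathbb{A}_\infty$ (i.e. $\varphi(\cdot,t)$ is an $A_q$ weight for some $q$ with constants uniform in $t>0$), of uniformly lower type $p$ for some $p\in(0,1]$ and uniformly upper type 1 ($\varphi(x,st)\le Cs^p\varphi(x,t)$ for $s\le1$,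 $\varphi(x,st)\le Cs\varphi(x,t)$ for $s\ge1$). $(\varphi,\infty,s)$ is an admissible triplet ($s\in\mathbb{N}$ at least the critical index $m(\varphi)$). A $(\varphi,\infty,s)$-atom associated with a ball $B$ is a measurable $a$ supported in $B$ with $\|a\|_{L^\infty}\le\|\chi_B\|_{L^\varphi}^{-1}$ and $\int a(x)x^\gamma dx=0$ for all $|\gamma|\le s$, where $\|f\|_{L^\varphi}:=\inf\{\lambda>0:\int\varphi(x,|f(x)|/\lambda)dx\le1\}$; a multiple of an atom is $ca$ for a constant $c$. *)

theory Defs
  imports "HOL-Analysis.Analysis"
begin

definition sphere_cone :: "'a::euclidean_space set \<Rightarrow> 'a set" where
  "sphere_cone A = {x. x \<noteq> 0 \<and> norm x \<le> 1 \<and> x /\<^sub>R norm x \<in> A}"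

text \<open>Standard surface measure sigma on S^{n-1}: sigma(A) = n * |cone(A)|.\<close>
definition sphere_measure :: "'a::euclidean_space measure" where
  "sphere_measure = measure_of (sphere 0 1)
     {A. A \<subseteq> sphere 0 1 \<and> sphere_cone A \<in> sets lebesgue}
     (\<lambda>A. ennreal (real DIM('a)) * emeasure lebesgue (sphere_cone A))"

definition locally_integrable_punctured :: "('a::euclidean_space \<Rightarrow> real) \<Rightarrow> bool" where
  "locally_integrable_punctured \<Omega> \<longleftrightarrow>
     (\<forall>K. compact K \<and> 0 \<notin> K \<longrightarrow> set_integrable lebesgue K \<Omega>)"

definition homogeneous_deg0 :: "('a::real_normed_vector \<Rightarrow> real) \<Rightarrow> bool" where
  "homogeneous_deg0 \<Omega> \<longleftrightarrow> (\<forall>x t. x \<noteq> 0 \<and> t > 0 \<longrightarrow> \<Omega> (t *\<^sub>R x) = \<Omega> x)"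

definition L1_sphere_norm :: "('a::euclidean_space \<Rightarrow> real) \<Rightarrow> real" where
  "L1_sphere_norm \<Omega> = integral\<^sup>L sphere_measure (\<lambda>x. \<bar>\<Omega> x\<bar>)"

definition F_rho :: "real \<Rightarrow> ('a::euclidean_space \<Rightarrow> real) \<Rightarrow> ('a \<Rightarrow> real) \<Rightarrow> real \<Rightarrow> 'a \<Rightarrow> real" where
  "F_rho \<rho> \<Omega> f t x =
     (LINT y : cball x t | lebesgue. \<Omega> (x - y) * norm (x - y) powr (\<rho> - real DIM('a)) * f y)"

definition mu_rho :: "real \<Rightarrow> ('a::euclidean_space \<Rightarrow> real) \<Rightarrow> ('a \<Rightarrow> real) \<Rightarrow> 'a \<Rightarrow> ennreal" where
  "mu_rho \<rho> \<Omega> f x =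
     (let I = (\<integral>\<^sup>+ t \<in> {0<..}. ennreal ((F_rho \<rho> \<Omega> f t x)\<^sup>2 * t powr (- 2 * \<rho> - 1)) \<partial>lborel)
      in if I = \<infinity> then \<infinity> else ennreal (sqrt (enn2real I)))"

definition orlicz_function :: "(real \<Rightarrow> real) \<Rightarrow> bool" where
  "orlicz_function \<Phi> \<longleftrightarrow>
     (\<forall>t\<ge>0. \<Phi> t \<ge> 0) \<and> mono_on {0..} \<Phi> \<and> \<Phi> 0 = 0 \<and> (\<forall>t>0. \<Phi> t > 0) \<and>
     filterlim \<Phi> at_top at_top"

definition musielak_orlicz :: "('a::euclidean_space \<Rightarrow> real \<Rightarrow> real) \<Rightarrow> bool" where
  "musielak_orlicz \<phi> \<longleftrightarrow>
     (\<forall>x. orlicz_function (\<phi> x)) \<and> (\<forall>t\<ge>0. (\<lambda>x. \<phi> x t) \<in> borel_measurable lebesgue)"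

definition uniform_Aq :: "('a::euclidean_space \<Rightarrow> real \<Rightarrow> real) \<Rightarrow> real \<Rightarrow> bool" where
  "uniform_Aq \<phi> q \<longleftrightarrow>
    (if q = 1 then
       (\<exists>C::real. \<forall>t>0. \<forall>c r. r > 0 \<longrightarrow>
          (AE y in lebesgue. y \<in> ball c r \<longrightarrow>
             (1 / emeasure lebesgue (ball c r)) * (\<integral>\<^sup>+ x \<in> ball c r. ennreal (\<phi> x t) \<partial>lebesgue)
               \<le> ennreal (C * \<phi> y t)))
     else q > 1 \<and>
       (\<exists>C::real. \<forall>t>0. \<forall>c r. r > 0 \<longrightarrow>
          (let A = (1 / emeasure lebesgue (ball c r)) *
                     (\<integral>\<^sup>+ x \<in> ball c r. ennreal (\<phi> x t) \<partial>lebesgue);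
               A' = (1 / emeasure lebesgue (ball c r)) *
                     (\<integral>\<^sup>+ y \<in> ball c r. ennreal (\<phi> y t powr (- 1 / (q - 1))) \<partial>lebesgue)
           in A < \<infinity> \<and> A' < \<infinity> \<and> enn2real A * enn2real A' powr (q - 1) \<le> C)))"

definition uniform_A_infty :: "('a::euclidean_space \<Rightarrow> real \<Rightarrow> real) \<Rightarrow> bool" where
  "uniform_A_infty \<phi> \<longleftrightarrow> (\<exists>q\<ge>1. uniform_Aq \<phi> q)"

definition uniformly_lower_type :: "('a \<Rightarrow> real \<Rightarrow> real) \<Rightarrow> real \<Rightarrow> bool" where
  "uniformly_lower_type \<phi> p \<longleftrightarrow>
     (\<exists>C>0. \<forall>x t s. t \<ge> 0 \<and> 0 < s \<and> s \<le> 1 \<longrightarrow> \<phi> x (s * t) \<le> C * s powr p * \<phi> x t)"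

definition uniformly_upper_type :: "('a \<Rightarrow> real \<Rightarrow> real) \<Rightarrow> real \<Rightarrow> bool" where
  "uniformly_upper_type \<phi> p \<longleftrightarrow>
     (\<exists>C>0. \<forall>x t s. t \<ge> 0 \<and> s \<ge> 1 \<longrightarrow> \<phi> x (s * t) \<le> C * s powr p * \<phi> x t)"

definition growth_function :: "('a::euclidean_space \<Rightarrow> real \<Rightarrow> real) \<Rightarrow> bool" where
  "growth_function \<phi> \<longleftrightarrow>
     musielak_orlicz \<phi> \<and> uniform_A_infty \<phi> \<and>
     (\<exists>p. 0 < p \<and> p \<le> 1 \<and> uniformly_lower_type \<phi> p) \<and> uniformly_upper_type \<phi> 1"

definition q_index :: "('a::euclidean_space \<Rightarrow> real \<Rightarrow> real) \<Rightarrow> real" where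
  "q_index \<phi> = Inf {q. q \<ge> 1 \<and> uniform_Aq \<phi> q}"

definition i_index :: "('a \<Rightarrow> real \<Rightarrow> real) \<Rightarrow> real" where
  "i_index \<phi> = Sup {p. 0 < p \<and> p \<le> 1 \<and> uniformly_lower_type \<phi> p}"

definition m_index :: "('a::euclidean_space \<Rightarrow> real \<Rightarrow> real) \<Rightarrow> int" where
  "m_index \<phi> = \<lfloor>real DIM('a) * (q_index \<phi> / i_index \<phi> - 1)\<rfloor>"

text \<open>(phi, infinity, s) admissible: s a nonnegative integer with s >= m(phi)
  (the condition q in (q(phi), infinity] is automatic for q = infinity).\<close>
definition admissible_infty :: "('a::euclidean_space \<Rightarrow> real \<Rightarrow> real) \<Rightarrow> nat \<Rightarrow> bool" where
  "admissible_infty \<phi> s \<longleftrightarrow> growth_function \<phi> \<and> int s \<ge> m_index \<phi>"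

definition L_phi_norm :: "('a::euclidean_space \<Rightarrow> real \<Rightarrow> real) \<Rightarrow> ('a \<Rightarrow> real) \<Rightarrow> real" where
  "L_phi_norm \<phi> f =
     Inf {l. l > 0 \<and> (\<integral>\<^sup>+ x. ennreal (\<phi> x (\<bar>f x\<bar> / l)) \<partial>lebesgue) \<le> 1}"

definition Linf_norm :: "('a::euclidean_space \<Rightarrow> real) \<Rightarrow> real" where
  "Linf_norm f = Inf {C. C \<ge> 0 \<and> (AE x in lebesgue. \<bar>f x\<bar> \<le> C)}"

definition monomial :: "('a::euclidean_space \<Rightarrow> nat) \<Rightarrow> 'a \<Rightarrow> real" where
  "monomial \<gamma> x = (\<Prod>i\<in>Basis. (x \<bullet> i) ^ \<gamma> i)"

definition phi_atom ::
  "('a::euclidean_space \<Rightarrow> real \<Rightarrow> real) \<Rightarrow> nat \<Rightarrow> 'a set \<Rightarrow> ('a \<Rightarrow> real) \<Rightarrow> bool" where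
  "phi_atom \<phi> s B a \<longleftrightarrow>
     a \<in> borel_measurable lebesgue \<and>
     (\<forall>x. x \<notin> B \<longrightarrow> a x = 0) \<and>
     (AE x in lebesgue. \<bar>a x\<bar> \<le> 1 / L_phi_norm \<phi> (indicator B)) \<and>
     (\<forall>\<gamma>::'a \<Rightarrow> nat. (\<Sum>i\<in>Basis. \<gamma> i) \<le> s \<longrightarrow>
        (\<integral>x. a x * monomial \<gamma> x \<partial>lebesgue) = 0)"

definition multiple_of_phi_atom ::
  "('a::euclidean_space \<Rightarrow> real \<Rightarrow> real) \<Rightarrow> nat \<Rightarrow> 'a set \<Rightarrow> ('a \<Rightarrow> real) \<Rightarrow> bool" where
  "multiple_of_phi_atom \<phi> s B b \<longleftrightarrow> (\<exists>c a. phi_atom \<phi> s B a \<and> b = (\<lambda>x. c * a x))"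

end

theory Submission
  imports Defs
begin


lemma nn_integral_lebesgue_affine_euclidean:
  fixes f :: "'a::euclidean_space \<Rightarrow> ennreal"
  assumes f[measurable]: "f \<in> borel_measurable lebesgue" and c: "c \<noteq> 0"
  shows "(\<integral>\<^sup>+x. f x \<partial>lebesgue) = ennreal (\<bar>c\<bar> ^ DIM('a)) * (\<integral>\<^sup>+x. f (t + c *\<^sub>R x) \<partial>lebesgue)"
proof -
  have T: "(\<lambda>x. t + (\<Sum>j\<in>Basis. (c * (x \<bullet> j)) *\<^sub>R j)) = (\<lambda>x::'a. t + c *\<^sub>R x)"
  proof
    fix x :: 'a
    have "(\<Sum>j\<in>Basis. (c * (x \<bullet> j)) *\<^sub>R j) = c *\<^sub>R (\<Sum>j\<in>Basis. (x \<bullet> j) *\<^sub>R j)"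
      by (simp add: scaleR_sum_right)
    then show "t + (\<Sum>j\<in>Basis. (c * (x \<bullet> j)) *\<^sub>R j) = t + c *\<^sub>R x"
      by (simp add: euclidean_representation)
  qed
  have L: "lebesgue = density (distr lebesgue lebesgue (\<lambda>x::'a. t + c *\<^sub>R x)) (\<lambda>_. ennreal (\<bar>c\<bar> ^ DIM('a)))"
    using lebesgue_affine_euclidean[of "\<lambda>_. c" t] c unfolding T by (simp add: prod_constant)
  have meas: "(\<lambda>x::'a. t + c *\<^sub>R x) \<in> lebesgue \<rightarrow>\<^sub>M lebesgue"
    using lebesgue_affine_measurable[of "\<lambda>_. c" t] c unfolding T by simp
  have "(\<integral>\<^sup>+x. f x \<partial>lebesgue) = (\<integral>\<^sup>+x. f x \<partial>density (distr lebesgue lebesgue (\<lambda>x::'a. t + c *\<^sub>R x)) (\<lambda>_. ennreal (\<bar>c\<bar> ^ DIM('a))))"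
    using L by simp
  also have "\<dots> = \<integral>\<^sup>+ x. ennreal (\<bar>c\<bar> ^ DIM('a)) * f x \<partial>distr lebesgue lebesgue (\<lambda>x::'a. t + c *\<^sub>R x)"
    by (subst nn_integral_density) auto
  also have "\<dots> = ennreal (\<bar>c\<bar> ^ DIM('a)) * integral\<^sup>N (distr lebesgue lebesgue (\<lambda>x::'a. t + c *\<^sub>R x)) f"
    using f measurable_distr_eq1 nn_integral_cmult by blast
  also have "\<dots> = ennreal (\<bar>c\<bar> ^ DIM('a)) * (\<integral>\<^sup>+x. f (t + c *\<^sub>R x) \<partial>lebesgue)"
    using meas by (subst nn_integral_distr) auto
  finally show ?thesis .
qed

lemma nn_FTC_Ioc:
  fixes f F :: "real \<Rightarrow> real"
  assumes ab: "a \<le> b"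
    and der: "\<And>x. x \<in> {a..b} \<Longrightarrow> (F has_real_derivative f x) (at x within {a..b})"
    and nn: "\<And>x. x \<in> {a..b} \<Longrightarrow> 0 \<le> f x"
  shows "(\<integral>\<^sup>+x. ennreal (f x) * indicator {a<..b} x \<partial>lborel) = ennreal (F b - F a)"
proof -
  have "(f has_integral (F b - F a)) {a..b}"
    using fundamental_theorem_of_calculus[OF ab, of F f] der
    by (simp add: has_real_derivative_iff_has_vector_derivative)
  then have "(\<integral>\<^sup>+x. ennreal (f x) * indicator {a..b} x \<partial>lborel) = ennreal (F b - F a)"
    using nn by (intro nn_integral_has_integral_lebesgue') auto
  moreover have "(\<integral>\<^sup>+x. ennreal (f x) * indicator {a<..b} x \<partial>lborel) = (\<integral>\<^sup>+x. ennreal (f x) * indicator {a..b} x \<partial>lborel)"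
    by (intro nn_integral_cong_AE) (use AE_lborel_singleton[of a] in \<open>eventually_elim, auto simp: indicator_def\<close>)
  ultimately show ?thesis by simp
qed



definition SA :: "'a::euclidean_space set set" where
  "SA = {A. A \<subseteq> sphere 0 1 \<and> sphere_cone A \<in> sets lebesgue}"

definition PB :: "'a::euclidean_space set" where
  "PB = {z. z \<noteq> 0 \<and> norm z \<le> 1}"

lemma cone_sphere: "sphere_cone (sphere (0::'a::euclidean_space) 1) = PB"
  by (auto simp: sphere_cone_def PB_def)

lemma PB_sets[measurable]: "PB \<in> sets (lebesgue :: 'a::euclidean_space measure)"
proof -
  have "PB = cball (0::'a) 1 - {0}" by (auto simp: PB_def)
  moreover have "cball (0::'a) 1 - {0} \<in> sets lebesgue" by (intro sets_completionI_sets) (auto simp: borel_closed)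
  ultimately show ?thesis by simp
qed

lemma cone_diff: "A \<subseteq> sphere 0 1 \<Longrightarrow> sphere_cone (sphere 0 1 - A) = PB - sphere_cone (A::'a::euclidean_space set)"
  by (auto simp: sphere_cone_def PB_def)

lemma cone_UN: "sphere_cone (\<Union>i. A i) = (\<Union>i. sphere_cone (A i))"
  by (auto simp: sphere_cone_def)

lemma sigma_SA: "sigma_algebra (sphere (0::'a::euclidean_space) 1) SA"
  unfolding sigma_algebra_iff2
proof (intro conjI ballI allI impI)
  show "SA \<subseteq> Pow (sphere (0::'a) 1)" by (auto simp: SA_def)
  show "{} \<in> (SA :: 'a set set)" by (auto simp: SA_def sphere_cone_def)
  fix s :: "'a set" assume "s \<in> SA"
  then show "sphere 0 1 - s \<in> SA"
    by (auto simp: SA_def cone_diff)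
next
  fix A :: "nat \<Rightarrow> 'a set" assume "range A \<subseteq> SA"
  then have "range (\<lambda>i. sphere_cone (A i)) \<subseteq> sets lebesgue" "\<And>i. A i \<subseteq> sphere 0 1"
    by (auto simp: SA_def)
  then show "(\<Union>i. A i) \<in> SA"
    unfolding SA_def using sets.countable_UN[of "\<lambda>i. sphere_cone (A i)" UNIV lebesgue] by (auto simp: cone_UN)
qed

lemma sets_sphere_measure: "sets (sphere_measure :: 'a::euclidean_space measure) = SA"
proof -
  interpret sigma_algebra "sphere (0::'a) 1" SA by (rule sigma_SA)
  have P: "SA \<subseteq> Pow (sphere (0::'a) 1)" by (auto simp: SA_def)
  show ?thesis unfolding sphere_measure_def SA_def[symmetric] sets_measure_of[OF P] sigma_sets_eq ..
qed

lemma space_sphere_measure: "space (sphere_measure :: 'a::euclidean_space measure) = sphere 0 1"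
  unfolding sphere_measure_def by (subst space_measure_of) auto

lemma emeasure_sphere_measure:
  assumes "A \<in> SA"
  shows "emeasure (sphere_measure :: 'a::euclidean_space measure) A = ennreal (real DIM('a)) * emeasure lebesgue (sphere_cone A)"
  unfolding sphere_measure_def SA_def[symmetric]
proof (rule emeasure_measure_of_sigma[OF sigma_SA _ _ assms])
  show "positive SA (\<lambda>A::'a set. ennreal (real DIM('a)) * emeasure lebesgue (sphere_cone A))"
    by (auto simp: positive_def sphere_cone_def)
  show "countably_additive SA (\<lambda>A::'a set. ennreal (real DIM('a)) * emeasure lebesgue (sphere_cone A))"
    unfolding countably_additive_def
  proof (intro allI impI)
    fix A :: "nat \<Rightarrow> 'a set"
    assume A: "range A \<subseteq> SA" "disjoint_family A" "\<Union> (range A) \<in> SA"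
    have "disjoint_family (\<lambda>i. sphere_cone (A i))"
      using A(2) unfolding disjoint_family_on_def sphere_cone_def by blast
    moreover have "range (\<lambda>i. sphere_cone (A i)) \<subseteq> sets lebesgue" using A(1) by (auto simp: SA_def)
    ultimately have "(\<Sum>i. emeasure lebesgue (sphere_cone (A i))) = emeasure lebesgue (\<Union>i. sphere_cone (A i))"
      by (rule suminf_emeasure[rotated])
    then show "(\<Sum>i. ennreal (real DIM('a)) * emeasure lebesgue (sphere_cone (A i))) =
          ennreal (real DIM('a)) * emeasure lebesgue (sphere_cone (\<Union> (range A)))"
      by (simp add: ennreal_suminf_cmult cone_UN)
  qed
qed

lemma nn_integral_sphere_measure:
  assumes h: "h \<in> borel_measurable (sphere_measure :: 'a::euclidean_space measure)"
  shows "(\<integral>\<^sup>+x. h x \<partial>sphere_measure) =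
    ennreal (real DIM('a)) * (\<integral>\<^sup>+z. h (z /\<^sub>R norm z) * indicator PB z \<partial>(lebesgue :: 'a measure))"
proof -
  define P where "P = restrict_space (lebesgue :: 'a measure) PB"
  define \<pi> where "\<pi> = (\<lambda>z::'a. z /\<^sub>R norm z)"
  have spP: "space P = PB" by (simp add: P_def)
  have pre: "\<pi> -` A \<inter> PB = sphere_cone A" if "A \<subseteq> sphere 0 1" for A
    using that by (auto simp: \<pi>_def sphere_cone_def PB_def)
  have meas: "\<pi> \<in> P \<rightarrow>\<^sub>M sphere_measure"
  proof (rule measurableI)
    fix x assume "x \<in> space P" then show "\<pi> x \<in> space sphere_measure"
      by (auto simp: spP PB_def space_sphere_measure \<pi>_def)
  next
    fix A assume "A \<in> sets (sphere_measure :: 'a measure)"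
    then have A: "A \<in> SA" by (simp add: sets_sphere_measure)
    then show "\<pi> -` A \<inter> space P \<in> sets P"
      unfolding spP P_def using pre[of A]
      by (subst sets_restrict_space_iff) (auto simp: SA_def PB_def sphere_cone_def)
  qed
  have eq: "(sphere_measure :: 'a measure) = density (distr P sphere_measure \<pi>) (\<lambda>_. ennreal (real DIM('a)))"
  proof (rule measure_eqI)
    show "sets (sphere_measure :: 'a measure) = sets (density (distr P sphere_measure \<pi>) (\<lambda>_. ennreal (real DIM('a))))"
      by simp
  next
    fix A assume "A \<in> sets (sphere_measure :: 'a measure)"
    then have A: "A \<in> SA" and A': "A \<in> sets (sphere_measure :: 'a measure)" by (simp_all add: sets_sphere_measure)
    have "emeasure (density (distr P sphere_measure \<pi>) (\<lambda>_. ennreal (real DIM('a)))) A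
        = ennreal (real DIM('a)) * emeasure (distr P sphere_measure \<pi>) A"
      using A' by (simp add: emeasure_density nn_integral_cmult_indicator)
    also have "\<dots> = ennreal (real DIM('a)) * emeasure P (\<pi> -` A \<inter> space P)"
      using A' meas by (simp add: emeasure_distr)
    also have "\<dots> = ennreal (real DIM('a)) * emeasure lebesgue (sphere_cone A)"
      using A pre[of A] unfolding spP P_def
      by (subst emeasure_restrict_space) (auto simp: SA_def)
    finally show "emeasure sphere_measure A = emeasure (density (distr P sphere_measure \<pi>) (\<lambda>_. ennreal (real DIM('a)))) A"
      using emeasure_sphere_measure[OF A] by simp
  qed
  have "(\<integral>\<^sup>+x. h x \<partial>sphere_measure) = (\<integral>\<^sup>+x. h x \<partial>density (distr P sphere_measure \<pi>) (\<lambda>_. ennreal (real DIM('a))))"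
    by (subst eq) simp
  also have "\<dots> = (\<integral>\<^sup>+x. ennreal (real DIM('a)) * h x \<partial>distr P sphere_measure \<pi>)"
    using h by (subst nn_integral_density) auto
  also have "\<dots> = ennreal (real DIM('a)) * (\<integral>\<^sup>+x. h x \<partial>distr P sphere_measure \<pi>)"
    using h by (subst nn_integral_cmult) auto
  also have "\<dots> = ennreal (real DIM('a)) * (\<integral>\<^sup>+x. h (\<pi> x) \<partial>P)"
    using h meas by (subst nn_integral_distr) auto
  also have "\<dots> = ennreal (real DIM('a)) * (\<integral>\<^sup>+z. h (\<pi> z) * indicator PB z \<partial>lebesgue)"
    unfolding P_def by (subst nn_integral_restrict_space) auto
  finally show ?thesis by (simp add: \<pi>_def)
qed



definition Sh :: "real \<Rightarrow> real \<Rightarrow> 'a::euclidean_space set" where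
  "Sh a b = {z. a < norm z \<and> norm z \<le> b}"

lemma Sh_sets[measurable]: "Sh a b \<in> sets (lebesgue :: 'a::euclidean_space measure)"
proof -
  have "Sh a b = {z::'a. a < norm z} \<inter> cball 0 b" by (auto simp: Sh_def)
  moreover have "{z::'a. a < norm z} \<inter> cball 0 b \<in> sets borel"
    by (intro sets.Int borel_open borel_closed open_Collect_less) (auto intro: continuous_intros)
  ultimately show ?thesis by (auto intro: sets_completionI_sets)
qed

lemma PB_Sh: "PB = Sh 0 1"
  by (auto simp: PB_def Sh_def)

lemma meas_Omega:
  fixes \<Omega> :: "'a::euclidean_space \<Rightarrow> real"
  assumes "locally_integrable_punctured \<Omega>"
  shows "\<Omega> \<in> borel_measurable lebesgue"
proof -
  define A where "A k = cball (0::'a) (Suc k) - ball 0 (1 / Suc k)" for k :: nat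
  have "compact (A k)" for k unfolding A_def by (intro compact_diff) auto
  moreover have "0 \<notin> A k" for k unfolding A_def by auto
  ultimately have "set_integrable lebesgue (A k) \<Omega>" for k
    using assms unfolding locally_integrable_punctured_def by blast
  then have m: "(\<lambda>z. indicator (A k) z *\<^sub>R \<Omega> z) \<in> borel_measurable lebesgue" for k
    unfolding set_integrable_def by (rule borel_measurable_integrable)
  define u where "u k z = indicator (A k) z *\<^sub>R \<Omega> z + indicator {0} z * \<Omega> 0" for k z
  have um: "u k \<in> borel_measurable lebesgue" for k
    unfolding u_def by (intro borel_measurable_add m borel_measurable_times borel_measurable_indicator measurable_const) auto
  have "(\<lambda>k. u k z) \<longlonglongrightarrow> \<Omega> z" for z
  proof (cases "z = 0")
    case True then show ?thesis by (simp add: u_def A_def)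
  next
    case False
    then have "norm z > 0" by simp
    obtain N1 :: nat where N1: "norm z \<le> N1" using real_arch_simple by blast
    obtain N2 :: nat where N2: "1 / norm z < N2" using reals_Archimedean2 by blast
    have "eventually (\<lambda>k. u k z = \<Omega> z) sequentially"
      unfolding eventually_sequentially
    proof (intro exI[of _ "N1 + N2"] allI impI)
      fix k assume k: "N1 + N2 \<le> k"
      have "norm z \<le> Suc k" using N1 k by linarith
      moreover have "1 / Suc k \<le> norm z"
      proof -
        have "1 / norm z < Suc k" using N2 k by linarith
        then show ?thesis using \<open>norm z > 0\<close> by (simp add: field_simps)
      qed
      ultimately show "u k z = \<Omega> z" using False by (simp add: u_def A_def)
    qed
    then show ?thesis by (rule tendsto_eventually)
  qed
  then show ?thesis by (rule borel_measurable_LIMSEQ_real[OF _ um])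
qed

lemma scale_J:
  fixes \<Omega> :: "'a::euclidean_space \<Rightarrow> real"
  assumes hom: "homogeneous_deg0 \<Omega>" and [measurable]: "\<Omega> \<in> borel_measurable lebesgue"
    and s: "s > 0" and a: "0 \<le> a"
  shows "(\<integral>\<^sup>+ z. ennreal \<bar>\<Omega> z\<bar> * indicator (Sh (s*a) (s*b)) z \<partial>lebesgue)
       = ennreal (s ^ DIM('a)) * (\<integral>\<^sup>+ z. ennreal \<bar>\<Omega> z\<bar> * indicator (Sh a b) z \<partial>lebesgue)"
proof -
  have "(\<integral>\<^sup>+ z. ennreal \<bar>\<Omega> z\<bar> * indicator (Sh (s*a) (s*b)) z \<partial>lebesgue)
     = ennreal (\<bar>s\<bar> ^ DIM('a)) * (\<integral>\<^sup>+ z. ennreal \<bar>\<Omega> (0 + s *\<^sub>R z)\<bar> * indicator (Sh (s*a) (s*b)) (0 + s *\<^sub>R z) \<partial>lebesgue)"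
    using s by (intro nn_integral_lebesgue_affine_euclidean) auto
  also have "(\<lambda>z. ennreal \<bar>\<Omega> (0 + s *\<^sub>R z)\<bar> * indicator (Sh (s*a) (s*b)) (0 + s *\<^sub>R z))
      = (\<lambda>z. ennreal \<bar>\<Omega> z\<bar> * indicator (Sh a b) z)"
  proof
    fix z :: 'a
    have iff: "s *\<^sub>R z \<in> Sh (s*a) (s*b) \<longleftrightarrow> z \<in> Sh a b"
      using s by (simp add: Sh_def)
    show "ennreal \<bar>\<Omega> (0 + s *\<^sub>R z)\<bar> * indicator (Sh (s*a) (s*b)) (0 + s *\<^sub>R z) = ennreal \<bar>\<Omega> z\<bar> * indicator (Sh a b) z"
    proof (cases "z \<in> Sh a b")
      case True
      then have "z \<noteq> 0" using a by (auto simp: Sh_def)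
      then have "\<Omega> (s *\<^sub>R z) = \<Omega> z" using hom s by (simp add: homogeneous_deg0_def)
      then show ?thesis using True iff by simp
    next
      case False then show ?thesis using iff by simp
    qed
  qed
  finally show ?thesis using s by simp
qed



lemma J_split:
  fixes \<Omega> :: "'a::euclidean_space \<Rightarrow> real"
  assumes [measurable]: "\<Omega> \<in> borel_measurable lebesgue" and "a \<le> b" "b \<le> c"
  shows "(\<integral>\<^sup>+ z. ennreal \<bar>\<Omega> z\<bar> * indicator (Sh a c) z \<partial>lebesgue)
    = (\<integral>\<^sup>+ z. ennreal \<bar>\<Omega> z\<bar> * indicator (Sh a b) z \<partial>lebesgue) + (\<integral>\<^sup>+ z. ennreal \<bar>\<Omega> z\<bar> * indicator (Sh b c) z \<partial>lebesgue)"
proof -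
  have "(\<lambda>z. ennreal \<bar>\<Omega> z\<bar> * indicator (Sh a c) z) = (\<lambda>z. ennreal \<bar>\<Omega> z\<bar> * indicator (Sh a b) z + ennreal \<bar>\<Omega> z\<bar> * indicator (Sh b c) z)"
    using assms(2,3) by (auto simp: Sh_def indicator_def fun_eq_iff)
  then show ?thesis by (simp add: nn_integral_add)
qed

lemma J_finite:
  fixes \<Omega> :: "'a::euclidean_space \<Rightarrow> real"
  assumes li: "locally_integrable_punctured \<Omega>" and hom: "homogeneous_deg0 \<Omega>"
  shows "(\<integral>\<^sup>+ z. ennreal \<bar>\<Omega> z\<bar> * indicator (Sh 0 1) z \<partial>lebesgue) < \<infinity>"
proof -
  have meas[measurable]: "\<Omega> \<in> borel_measurable lebesgue" by (rule meas_Omega[OF li])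
  define J where "J a b = (\<integral>\<^sup>+ z. ennreal \<bar>\<Omega> z\<bar> * indicator (Sh a b) z \<partial>lebesgue)" for a b
  define Ann where "Ann = cball (0::'a) 1 - ball 0 (1/2)"
  have "compact Ann" unfolding Ann_def by (intro compact_diff) auto
  moreover have "0 \<notin> Ann" unfolding Ann_def by auto
  ultimately have "set_integrable lebesgue Ann \<Omega>"
    using li unfolding locally_integrable_punctured_def by blast
  then have fin: "(\<integral>\<^sup>+ z. ennreal (norm (indicator Ann z *\<^sub>R \<Omega> z)) \<partial>lebesgue) < \<infinity>"
    unfolding set_integrable_def integrable_iff_bounded by blast
  have "J (1/2) 1 \<le> (\<integral>\<^sup>+ z. ennreal (norm (indicator Ann z *\<^sub>R \<Omega> z)) \<partial>lebesgue)"
    unfolding J_def by (intro nn_integral_mono) (auto simp: Ann_def Sh_def indicator_def)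
  with fin have A: "J (1/2) 1 < \<infinity>" by simp
  have rec: "J ((1/2)^Suc N) 1 = J (1/2) 1 + ennreal ((1/2) ^ DIM('a)) * J ((1/2)^N) 1" for N
  proof -
    have "J ((1/2)^Suc N) 1 = J ((1/2)^Suc N) (1/2) + J (1/2) 1"
      unfolding J_def by (rule J_split) (auto simp: power_le_one)
    also have "J ((1/2)^Suc N) (1/2) = ennreal ((1/2) ^ DIM('a)) * J ((1/2)^N) 1"
      using scale_J[OF hom meas, of "1/2" "(1/2)^N" 1] unfolding J_def by simp
    finally show ?thesis by (simp add: add.commute)
  qed
  have bound: "J ((1/2)^N) 1 \<le> 2 * J (1/2) 1" for N
  proof (induction N)
    case 0
    have "Sh 1 1 = ({} :: 'a set)" by (auto simp: Sh_def)
    then have "J 1 1 = 0" unfolding J_def by simp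
    then show ?case by simp
  next
    case (Suc N)
    have h: "ennreal ((1/2) ^ DIM('a)) \<le> ennreal (1/2)"
    proof -
      have "(1/2::real) ^ DIM('a) \<le> (1/2) ^ 1"
        by (rule power_decreasing) (auto simp: DIM_positive Suc_leI)
      then show ?thesis by (intro ennreal_leI) simp
    qed
    have "ennreal ((1/2) ^ DIM('a)) * J ((1/2)^N) 1 \<le> ennreal (1/2) * (2 * J (1/2) 1)"
      by (intro mult_mono h Suc.IH) auto
    also have "\<dots> = (ennreal (1/2) * 2) * J (1/2) 1" by (simp add: mult.assoc)
    also have "ennreal (1/2) * 2 = 1"
    proof -
      have "ennreal (1/2) * 2 = ennreal (1/2) * ennreal 2" by (simp only: ennreal_numeral)
      also have "\<dots> = ennreal (1/2 * 2)" by (rule ennreal_mult''[symmetric]) simp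
      finally show ?thesis by simp
    qed
    finally have "ennreal ((1/2) ^ DIM('a)) * J ((1/2)^N) 1 \<le> J (1/2) 1" by simp
    then show ?case unfolding rec
      by (metis add_left_mono mult_2)
  qed
  have lim: "(\<lambda>N. J ((1/2)^N) 1) \<longlonglongrightarrow> J 0 1"
    unfolding J_def
  proof (rule nn_integral_LIMSEQ)
    show "incseq (\<lambda>N z. ennreal \<bar>\<Omega> z\<bar> * indicator (Sh ((1/2)^N) 1) z)"
    proof (rule incseq_SucI, rule le_funI)
      fix N z
      have "(1/2::real)^Suc N \<le> (1/2)^N" by (rule power_decreasing) auto
      then have "Sh ((1/2)^N) 1 \<subseteq> (Sh ((1/2)^Suc N) 1 :: 'a set)"
        unfolding Sh_def by clarsimp (smt (verit) norm_ge_zero)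
      then show "ennreal \<bar>\<Omega> z\<bar> * indicator (Sh ((1/2)^N) 1) z \<le> ennreal \<bar>\<Omega> z\<bar> * indicator (Sh ((1/2)^Suc N) 1) z"
        by (auto simp: indicator_def)
    qed
    show "(\<lambda>z. ennreal \<bar>\<Omega> z\<bar> * indicator (Sh ((1/2)^N) 1) z) \<in> borel_measurable lebesgue" for N
      by measurable
    fix z :: 'a
    show "(\<lambda>N. ennreal \<bar>\<Omega> z\<bar> * indicator (Sh ((1/2)^N) 1) z) \<longlonglongrightarrow> ennreal \<bar>\<Omega> z\<bar> * indicator (Sh 0 1) z"
    proof (cases "z \<in> Sh 0 1")
      case False
      then have "z \<notin> Sh ((1/2)^N) 1" for N by (auto simp: Sh_def intro: less_trans[rotated])
      then show ?thesis using False by simp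
    next
      case True
      then have "norm z > 0" by (simp add: Sh_def)
      obtain N0 where N0: "(1/2::real)^N0 < norm z" using real_arch_pow_inv[OF \<open>norm z > 0\<close>, of "1/2"] by auto
      have "eventually (\<lambda>N. ennreal \<bar>\<Omega> z\<bar> * indicator (Sh ((1/2)^N) 1) z = ennreal \<bar>\<Omega> z\<bar> * indicator (Sh 0 1) z) sequentially"
        unfolding eventually_sequentially
      proof (intro exI[of _ N0] allI impI)
        fix N assume "N0 \<le> N"
        then have "(1/2::real)^N \<le> (1/2)^N0" by (rule power_decreasing) auto
        then have "(1/2::real)^N < norm z" using N0 by linarith
        then show "ennreal \<bar>\<Omega> z\<bar> * indicator (Sh ((1/2)^N) 1) z = ennreal \<bar>\<Omega> z\<bar> * indicator (Sh 0 1) z"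
          using True N0 by (auto simp: Sh_def indicator_def)
      qed
      then show ?thesis by (rule tendsto_eventually)
    qed
  qed
  have "J 0 1 \<le> 2 * J (1/2) 1"
    using lim bound by (intro LIMSEQ_le_const2) auto
  also have "\<dots> < \<infinity>" using A by (simp add: ennreal_mult_less_top)
  finally show ?thesis unfolding J_def .
qed



lemma hom_normalize:
  assumes hom: "homogeneous_deg0 \<Omega>" and "z \<noteq> 0"
  shows "\<Omega> (z /\<^sub>R norm z) = \<Omega> z"
  using hom assms(2) unfolding homogeneous_deg0_def
  by (metis divideR_right norm_eq_zero scaleR_zero_left inverse_positive_iff_positive
      zero_less_norm_iff)

lemma Omega_meas_sphere:
  fixes \<Omega> :: "'a::euclidean_space \<Rightarrow> real"
  assumes meas: "\<Omega> \<in> borel_measurable lebesgue" and hom: "homogeneous_deg0 \<Omega>"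
  shows "\<Omega> \<in> borel_measurable sphere_measure"
proof (rule measurableI)
  fix x show "\<Omega> x \<in> space borel" by simp
next
  fix A :: "real set" assume A: "A \<in> sets borel"
  have "sphere_cone (\<Omega> -` A \<inter> space sphere_measure) = \<Omega> -` A \<inter> space lebesgue \<inter> PB"
    using hom_normalize[OF hom] by (auto simp: sphere_cone_def space_sphere_measure PB_def)
  moreover have "\<Omega> -` A \<inter> space lebesgue \<in> sets lebesgue" using measurable_sets[OF meas A] .
  ultimately have "sphere_cone (\<Omega> -` A \<inter> space sphere_measure) \<in> sets lebesgue"
    by (metis PB_sets sets.Int)
  then show "\<Omega> -` A \<inter> space sphere_measure \<in> sets sphere_measure"
    by (auto simp: sets_sphere_measure SA_def space_sphere_measure)
qed

lemma sphere_norm: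
  fixes \<Omega> :: "'a::euclidean_space \<Rightarrow> real"
  assumes li: "locally_integrable_punctured \<Omega>" and hom: "homogeneous_deg0 \<Omega>"
  shows "(\<integral>\<^sup>+ x. ennreal \<bar>\<Omega> x\<bar> \<partial>sphere_measure) = ennreal (real DIM('a)) * (\<integral>\<^sup>+ z. ennreal \<bar>\<Omega> z\<bar> * indicator (Sh 0 1) z \<partial>lebesgue)"
    and "L1_sphere_norm \<Omega> = real DIM('a) * enn2real (\<integral>\<^sup>+ z. ennreal \<bar>\<Omega> z\<bar> * indicator (Sh 0 1) z \<partial>lebesgue)"
proof -
  have meas[measurable]: "\<Omega> \<in> borel_measurable lebesgue" by (rule meas_Omega[OF li])
  have ms[measurable]: "\<Omega> \<in> borel_measurable sphere_measure" by (rule Omega_meas_sphere[OF meas hom])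
  have "(\<integral>\<^sup>+ x. ennreal \<bar>\<Omega> x\<bar> \<partial>sphere_measure) = ennreal (real DIM('a)) * (\<integral>\<^sup>+ z. ennreal \<bar>\<Omega> (z /\<^sub>R norm z)\<bar> * indicator PB z \<partial>lebesgue)"
    by (rule nn_integral_sphere_measure) measurable
  also have "(\<lambda>z. ennreal \<bar>\<Omega> (z /\<^sub>R norm z)\<bar> * indicator PB z) = (\<lambda>z. ennreal \<bar>\<Omega> z\<bar> * indicator (Sh 0 1) z)"
    using hom_normalize[OF hom] by (auto simp: PB_Sh indicator_def Sh_def fun_eq_iff)
  finally show eq: "(\<integral>\<^sup>+ x. ennreal \<bar>\<Omega> x\<bar> \<partial>sphere_measure) = ennreal (real DIM('a)) * (\<integral>\<^sup>+ z. ennreal \<bar>\<Omega> z\<bar> * indicator (Sh 0 1) z \<partial>lebesgue)" .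
  have "L1_sphere_norm \<Omega> = enn2real (\<integral>\<^sup>+ x. ennreal \<bar>\<Omega> x\<bar> \<partial>sphere_measure)"
    unfolding L1_sphere_norm_def by (rule integral_eq_nn_integral) auto
  then show "L1_sphere_norm \<Omega> = real DIM('a) * enn2real (\<integral>\<^sup>+ z. ennreal \<bar>\<Omega> z\<bar> * indicator (Sh 0 1) z \<partial>lebesgue)"
    unfolding eq by (simp add: enn2real_mult)
qed



lemma radial:
  fixes \<Omega> :: "'a::euclidean_space \<Rightarrow> real" and h :: "real \<Rightarrow> ennreal"
  assumes li: "locally_integrable_punctured \<Omega>" and hom: "homogeneous_deg0 \<Omega>"
    and c: "c > 0" and h[measurable]: "h \<in> borel_measurable borel"
  defines "k \<equiv> enn2real (\<integral>\<^sup>+ z. ennreal \<bar>\<Omega> z\<bar> * indicator (Sh 0 1) z \<partial>lebesgue)"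
  shows "(\<integral>\<^sup>+ z. ennreal \<bar>\<Omega> z\<bar> * indicator (Sh 0 c) z * h (norm z) \<partial>lebesgue)
       = (\<integral>\<^sup>+ s. ennreal (real DIM('a) * k * s ^ (DIM('a) - 1)) * indicator {0<..c} s * h s \<partial>lborel)"
proof -
  let ?n = "DIM('a)"
  have meas[measurable]: "\<Omega> \<in> borel_measurable lebesgue" by (rule meas_Omega[OF li])
  define J where "J a b = (\<integral>\<^sup>+ z. ennreal \<bar>\<Omega> z\<bar> * indicator (Sh a b) z \<partial>lebesgue)" for a b
  have k0: "k \<ge> 0" unfolding k_def by simp
  have J01: "J 0 1 = ennreal k"
    using J_finite[OF li hom] unfolding k_def J_def by (simp add: less_top)
  have J0s: "J 0 s = ennreal (s ^ ?n * k)" if "s \<ge> 0" for s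
  proof (cases "s = 0")
    case True
    have "Sh 0 0 = ({} :: 'a set)" by (auto simp: Sh_def)
    then show ?thesis using True DIM_positive[where 'a='a] unfolding J_def by (simp add: power_0_left)
  next
    case False
    then have "J (s*0) (s*1) = ennreal (s ^ ?n) * J 0 1"
      unfolding J_def using that by (intro scale_J[OF hom meas]) auto
    then show ?thesis using J01 that k0 by (simp add: ennreal_mult zero_le_power)
  qed
  have Jxc: "J x c = ennreal ((c ^ ?n - x ^ ?n) * k)" if "0 \<le> x" "x \<le> c" for x
  proof -
    have "J 0 c = J 0 x + J x c" unfolding J_def using that by (intro J_split) auto
    then have "ennreal (c ^ ?n * k) = ennreal (x ^ ?n * k) + J x c" using J0s that c by simp
    then have "ennreal (c ^ ?n * k) - ennreal (x ^ ?n * k) = (ennreal (x ^ ?n * k) + J x c) - ennreal (x ^ ?n * k)"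
      by simp
    also have "\<dots> = J x c" by (rule ennreal_add_diff_cancel_left) simp
    finally have "J x c = ennreal (c ^ ?n * k) - ennreal (x ^ ?n * k)" by simp
    also have "\<dots> = ennreal (c ^ ?n * k - x ^ ?n * k)"
      using that k0 by (intro ennreal_minus) simp
    finally show ?thesis by (simp add: algebra_simps)
  qed
  define E where "E x = (if c \<le> x then 0 else ennreal ((c ^ ?n - (max x 0) ^ ?n) * k))" for x
  define D where "D s = ennreal (real ?n * k * s ^ (?n - 1)) * indicator {0<..c} s" for s :: real
  define G where "G z = ennreal \<bar>\<Omega> z\<bar> * indicator (Sh 0 c) z" for z :: 'a
  have Gm[measurable]: "G \<in> borel_measurable lebesgue" unfolding G_def by measurable
  have Dm[measurable]: "D \<in> borel_measurable borel" unfolding D_def by measurable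
  have nm[measurable]: "(\<lambda>z::'a. norm z) \<in> borel_measurable lebesgue"
    by (rule measurable_completion) (simp add: borel_measurable_continuous_onI continuous_on_norm_id)
  define \<nu> where "\<nu> = distr (density lebesgue G) borel norm"
  define \<mu> where "\<mu> = density lborel D"
  have nu: "emeasure \<nu> {x<..} = E x" for x
  proof -
    have pre: "norm -` {x<..} \<in> sets (lebesgue :: 'a measure)"
      using measurable_sets[OF nm, of "{x<..}"] by simp
    have "emeasure \<nu> {x<..} = emeasure (density lebesgue G) (norm -` {x<..} \<inter> space (density lebesgue G))"
      unfolding \<nu>_def by (rule emeasure_distr) auto
    also have "\<dots> = (\<integral>\<^sup>+ z. G z * indicator (norm -` {x<..}) z \<partial>lebesgue)"
      using pre by (subst emeasure_density) (auto intro!: nn_integral_cong simp: mult.commute)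
    also have "\<dots> = E x"
    proof (cases "c \<le> x")
      case True
      then have "(\<lambda>z. G z * indicator (norm -` {x<..}) z) = (\<lambda>_. 0)"
        by (auto simp: G_def Sh_def indicator_def fun_eq_iff)
      then show ?thesis using True by (simp add: E_def)
    next
      case False
      then have "(\<lambda>z. G z * indicator (norm -` {x<..}) z) = (\<lambda>z. ennreal \<bar>\<Omega> z\<bar> * indicator (Sh (max x 0) c) z)"
        by (auto simp: G_def Sh_def indicator_def fun_eq_iff)
      then show ?thesis using False Jxc[of "max x 0"] c unfolding J_def E_def by simp
    qed
    finally show ?thesis .
  qed
  have mu: "emeasure \<mu> {x<..} = E x" for x
  proof -
    have "emeasure \<mu> {x<..} = (\<integral>\<^sup>+ s. D s * indicator {x<..} s \<partial>lborel)"
      unfolding \<mu>_def by (subst emeasure_density) (auto intro!: nn_integral_cong simp: mult.commute)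
    also have "\<dots> = E x"
    proof (cases "c \<le> x")
      case True
      then have "(\<lambda>s. D s * indicator {x<..} s) = (\<lambda>_. 0)"
        by (auto simp: D_def indicator_def fun_eq_iff)
      then show ?thesis using True by (simp add: E_def)
    next
      case False
      then have "(\<lambda>s. D s * indicator {x<..} s) = (\<lambda>s. ennreal (real ?n * k * s ^ (?n - 1)) * indicator {max x 0<..c} s)"
        by (auto simp: D_def indicator_def fun_eq_iff)
      moreover have "(\<integral>\<^sup>+ s. ennreal (real ?n * k * s ^ (?n - 1)) * indicator {max x 0<..c} s \<partial>lborel)
          = ennreal ((\<lambda>s. k * s ^ ?n) c - (\<lambda>s. k * s ^ ?n) (max x 0))"
      proof (rule nn_FTC_Ioc)
        show "max x 0 \<le> c" using False c by simp
        fix s assume s: "s \<in> {max x 0..c}"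
        show "((\<lambda>s. k * s ^ ?n) has_real_derivative real ?n * k * s ^ (?n - 1)) (at s within {max x 0..c})"
          by (rule has_field_derivative_at_within) (auto intro!: derivative_eq_intros)
        show "0 \<le> real ?n * k * s ^ (?n - 1)" using s k0 by simp
      qed
      ultimately show ?thesis using False unfolding E_def by (simp add: algebra_simps)
    qed
    finally show ?thesis .
  qed
  have "\<nu> = \<mu>"
  proof (rule measure_eqI_lessThan)
    show "sets \<nu> = sets borel" "sets \<mu> = sets borel" by (simp_all add: \<nu>_def \<mu>_def)
    show "emeasure \<nu> {x<..} < \<infinity>" for x by (simp add: nu E_def)
    show "emeasure \<nu> {x<..} = emeasure \<mu> {x<..}" for x by (simp add: nu mu)
  qed
  have "(\<integral>\<^sup>+ z. ennreal \<bar>\<Omega> z\<bar> * indicator (Sh 0 c) z * h (norm z) \<partial>lebesgue) = (\<integral>\<^sup>+ z. G z * h (norm z) \<partial>lebesgue)"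
    by (simp add: G_def)
  also have "\<dots> = (\<integral>\<^sup>+ z. h (norm z) \<partial>density lebesgue G)"
    by (subst nn_integral_density) auto
  also have "\<dots> = (\<integral>\<^sup>+ s. h s \<partial>\<nu>)"
    unfolding \<nu>_def by (subst nn_integral_distr) auto
  also have "\<dots> = (\<integral>\<^sup>+ s. h s \<partial>\<mu>)" using \<open>\<nu> = \<mu>\<close> by simp
  also have "\<dots> = (\<integral>\<^sup>+ s. D s * h s \<partial>lborel)"
    unfolding \<mu>_def by (subst nn_integral_density) auto
  finally show ?thesis by (simp add: D_def)
qed



lemma norm_meas_leb[measurable]: "(\<lambda>z::'a::euclidean_space. norm z) \<in> borel_measurable lebesgue"
  by (rule measurable_completion) (simp add: borel_measurable_continuous_onI continuous_on_norm_id)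

lemma F_bound:
  fixes \<Omega> :: "'a::euclidean_space \<Rightarrow> real" and b :: "'a \<Rightarrow> real"
  assumes li: "locally_integrable_punctured \<Omega>" and hom: "homogeneous_deg0 \<Omega>"
    and rho: "\<rho> > 0" and r: "r > 0" and R: "R \<ge> 2 * r"
    and x: "x \<in> ball 0 (2 * R) - ball 0 R"
    and bm: "b \<in> borel_measurable lebesgue" and bz: "\<And>y. y \<notin> ball 0 r \<Longrightarrow> b y = 0"
    and bL: "AE y in lebesgue. \<bar>b y\<bar> \<le> Lb" and Lb: "Lb \<ge> 0"
  shows "\<bar>F_rho \<rho> \<Omega> b t x\<bar> \<le> Lb * L1_sphere_norm \<Omega> *
     (if R - r < min t (2 * R + r) then min t (2 * R + r) powr \<rho> - (R - r) powr \<rho> else 0) / \<rho>"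
proof -
  let ?n = "DIM('a)"
  have meas[measurable]: "\<Omega> \<in> borel_measurable lebesgue" by (rule meas_Omega[OF li])
  define k where "k = enn2real (\<integral>\<^sup>+ z. ennreal \<bar>\<Omega> z\<bar> * indicator (Sh 0 1) z \<partial>lebesgue)"
  have k0: "k \<ge> 0" unfolding k_def by simp
  have L1: "L1_sphere_norm \<Omega> = real ?n * k" unfolding k_def by (rule sphere_norm(2)[OF li hom])
  define a0 where "a0 = R - r"
  define c where "c = 2 * R + r"
  define m where "m = min t c"
  have a0: "a0 > 0" using r R unfolding a0_def by simp
  have c: "c > 0" using r R unfolding c_def by simp
  have mc: "m \<le> c" unfolding m_def by simp
  have xR: "R \<le> norm x" "norm x < 2 * R" using x by auto
  define f where "f y = \<Omega> (x - y) * norm (x - y) powr (\<rho> - real ?n) * b y" for y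
  define g where "g z = ennreal \<bar>\<Omega> z\<bar> * indicator (Sh a0 m) z * ennreal (norm z powr (\<rho> - real ?n))" for z :: 'a
  have gm[measurable]: "g \<in> borel_measurable lebesgue" unfolding g_def by measurable
  define I where "I = (\<integral>\<^sup>+ y. ennreal (norm (indicator (cball x t) y *\<^sub>R f y)) \<partial>lebesgue)"
  have s1: "ennreal \<bar>F_rho \<rho> \<Omega> b t x\<bar> \<le> I"
  proof (cases "integrable lebesgue (\<lambda>y. indicator (cball x t) y *\<^sub>R f y)")
    case True
    then show ?thesis unfolding F_rho_def set_lebesgue_integral_def I_def f_def
      using integral_norm_bound_ennreal[OF True] by (simp add: f_def)
  next
    case False
    then show ?thesis unfolding F_rho_def set_lebesgue_integral_def I_def f_def
      by (simp add: not_integrable_integral_eq f_def)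
  qed
  have s2: "I \<le> (\<integral>\<^sup>+ y. ennreal Lb * g (x - y) \<partial>lebesgue)"
    unfolding I_def
  proof (rule nn_integral_mono_AE)
    show "AE y in lebesgue. ennreal (norm (indicator (cball x t) y *\<^sub>R f y)) \<le> ennreal Lb * g (x - y)"
      using bL
    proof eventually_elim
      fix y assume hb: "\<bar>b y\<bar> \<le> Lb"
      show "ennreal (norm (indicator (cball x t) y *\<^sub>R f y)) \<le> ennreal Lb * g (x - y)"
      proof (cases "y \<in> cball x t \<and> y \<in> ball 0 r")
        case True
        then have yt: "norm (x - y) \<le> t" and yr: "norm y < r" by (auto simp: dist_norm)
        have "norm (x - y) \<le> norm x + norm y" by (rule norm_triangle_ineq4)
        then have "norm (x - y) \<le> c" using yr xR unfolding c_def by linarith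
        moreover have "a0 < norm (x - y)"
          using norm_triangle_ineq2[of x y] yr xR unfolding a0_def by linarith
        ultimately have inS: "x - y \<in> Sh a0 m" using yt unfolding Sh_def m_def by auto
        have "norm (indicator (cball x t) y *\<^sub>R f y) = \<bar>\<Omega> (x - y)\<bar> * norm (x - y) powr (\<rho> - real ?n) * \<bar>b y\<bar>"
          using True by (simp add: f_def abs_mult)
        also have "\<dots> \<le> \<bar>\<Omega> (x - y)\<bar> * norm (x - y) powr (\<rho> - real ?n) * Lb"
          using hb by (intro mult_left_mono) auto
        finally have "ennreal (norm (indicator (cball x t) y *\<^sub>R f y)) \<le> ennreal (Lb * (\<bar>\<Omega> (x - y)\<bar> * norm (x - y) powr (\<rho> - real ?n)))"
          by (intro ennreal_leI) (simp add: algebra_simps)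
        also have "\<dots> = ennreal Lb * g (x - y)"
          using inS Lb by (simp add: g_def ennreal_mult)
        finally show ?thesis .
      next
        case False
        then have "indicator (cball x t) y *\<^sub>R f y = 0" using bz by (auto simp: f_def)
        then show ?thesis by (metis norm_zero ennreal_0 zero_le)
      qed
    qed
  qed
  have s3: "(\<integral>\<^sup>+ y. ennreal Lb * g (x - y) \<partial>lebesgue) = ennreal Lb * (\<integral>\<^sup>+ z. g z \<partial>lebesgue)"
  proof -
    have "(\<integral>\<^sup>+ z. ennreal Lb * g z \<partial>lebesgue) = ennreal (\<bar>-1\<bar> ^ ?n) * (\<integral>\<^sup>+ y. ennreal Lb * g (x + (-1) *\<^sub>R y) \<partial>lebesgue)"
      by (rule nn_integral_lebesgue_affine_euclidean) auto
    then have "(\<integral>\<^sup>+ y. ennreal Lb * g (x - y) \<partial>lebesgue) = (\<integral>\<^sup>+ z. ennreal Lb * g z \<partial>lebesgue)"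
      by simp
    also have "\<dots> = ennreal Lb * (\<integral>\<^sup>+ z. g z \<partial>lebesgue)"
      by (rule nn_integral_cmult) simp
    finally show ?thesis .
  qed
  define h where "h s = indicator {a0<..m} s * ennreal (s powr (\<rho> - real ?n))" for s :: real
  have hm[measurable]: "h \<in> borel_measurable borel" unfolding h_def by measurable
  have s4: "(\<integral>\<^sup>+ z. g z \<partial>lebesgue) = (\<integral>\<^sup>+ z. ennreal \<bar>\<Omega> z\<bar> * indicator (Sh 0 c) z * h (norm z) \<partial>lebesgue)"
    using a0 mc by (intro nn_integral_cong) (auto simp: g_def h_def Sh_def indicator_def)
  also have "\<dots> = (\<integral>\<^sup>+ s. ennreal (real ?n * k * s ^ (?n - 1)) * indicator {0<..c} s * h s \<partial>lborel)"
    unfolding k_def by (rule radial[OF li hom c hm])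
  finally have s5: "(\<integral>\<^sup>+ z. g z \<partial>lebesgue) = (\<integral>\<^sup>+ s. ennreal (real ?n * k * s ^ (?n - 1)) * indicator {0<..c} s * h s \<partial>lborel)" .
  define P where "P = (if a0 < m then m powr \<rho> - a0 powr \<rho> else 0)"
  have P0: "P \<ge> 0" unfolding P_def using a0 rho by (auto intro: powr_mono2)
  have s6: "(\<integral>\<^sup>+ z. g z \<partial>lebesgue) = ennreal (real ?n * k * P / \<rho>)"
  proof (cases "a0 < m")
    case False
    then have "(\<lambda>s. ennreal (real ?n * k * s ^ (?n - 1)) * indicator {0<..c} s * h s) = (\<lambda>_. 0)"
      by (auto simp: h_def indicator_def fun_eq_iff)
    then show ?thesis unfolding s5 P_def using False by simp
  next
    case True
    have "(\<lambda>s. ennreal (real ?n * k * s ^ (?n - 1)) * indicator {0<..c} s * h s)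
        = (\<lambda>s. ennreal (real ?n * k * s powr (\<rho> - 1)) * indicator {a0<..m} s)"
    proof
      fix s :: real
      show "ennreal (real ?n * k * s ^ (?n - 1)) * indicator {0<..c} s * h s = ennreal (real ?n * k * s powr (\<rho> - 1)) * indicator {a0<..m} s"
      proof (cases "s \<in> {a0<..m}")
        case True
        then have s: "s > 0" "s \<le> c" using a0 mc by auto
        have "s ^ (?n - 1) * s powr (\<rho> - real ?n) = s powr (real (?n - 1)) * s powr (\<rho> - real ?n)"
          using powr_realpow[OF s(1), of "?n - 1"] by simp
        also have "\<dots> = s powr (\<rho> - 1)"
          using s DIM_positive[where 'a='a] by (simp add: powr_add[symmetric] of_nat_diff)
        finally have eq: "s ^ (?n - 1) * s powr (\<rho> - real ?n) = s powr (\<rho> - 1)" .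
        have "ennreal (real ?n * k * s ^ (?n - 1)) * ennreal (s powr (\<rho> - real ?n)) = ennreal (real ?n * k * s powr (\<rho> - 1))"
          using s k0 eq by (simp add: ennreal_mult'[symmetric] mult.assoc)
        then show ?thesis using True s by (simp add: h_def indicator_def)
      next
        case False then show ?thesis by (simp add: h_def)
      qed
    qed
    moreover have "(\<integral>\<^sup>+ s. ennreal (real ?n * k * s powr (\<rho> - 1)) * indicator {a0<..m} s \<partial>lborel)
        = ennreal ((\<lambda>s. real ?n * k * s powr \<rho> / \<rho>) m - (\<lambda>s. real ?n * k * s powr \<rho> / \<rho>) a0)"
    proof (rule nn_FTC_Ioc)
      show "a0 \<le> m" using True by simp
      fix s assume s: "s \<in> {a0..m}"
      then have "s > 0" using a0 by auto
      show "((\<lambda>s. real ?n * k * s powr \<rho> / \<rho>) has_real_derivative real ?n * k * s powr (\<rho> - 1)) (at s within {a0..m})"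
        by (rule has_field_derivative_at_within)
          (use \<open>s > 0\<close> rho in \<open>auto intro!: derivative_eq_intros simp: field_simps\<close>)
      show "0 \<le> real ?n * k * s powr (\<rho> - 1)" using k0 by simp
    qed
    ultimately show ?thesis unfolding s5 P_def using True by (simp add: right_diff_distrib diff_divide_distrib)
  qed
  have "ennreal \<bar>F_rho \<rho> \<Omega> b t x\<bar> \<le> ennreal Lb * ennreal (real ?n * k * P / \<rho>)"
    using s1 s2 s3 s6 by simp
  also have "\<dots> = ennreal (Lb * L1_sphere_norm \<Omega> * P / \<rho>)"
    using Lb k0 P0 rho by (simp add: ennreal_mult'[symmetric] L1 mult.assoc)
  finally have "\<bar>F_rho \<rho> \<Omega> b t x\<bar> \<le> Lb * L1_sphere_norm \<Omega> * P / \<rho>"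
    using Lb k0 P0 rho L1 by (subst (asm) ennreal_le_iff) auto
  then show ?thesis unfolding P_def a0_def c_def m_def .
qed



lemma Linf_props:
  fixes b :: "'a::euclidean_space \<Rightarrow> real"
  assumes C0: "AE y in lebesgue. \<bar>b y\<bar> \<le> C0"
  shows "Linf_norm b \<ge> 0" "AE y in lebesgue. \<bar>b y\<bar> \<le> Linf_norm b"
proof -
  define S where "S = {C. C \<ge> 0 \<and> (AE x in lebesgue. \<bar>b x\<bar> \<le> C)}"
  have "max C0 0 \<in> S" unfolding S_def using C0 by (auto elim: eventually_mono)
  then have Sne: "S \<noteq> {}" by auto
  have L: "Linf_norm b = Inf S" unfolding Linf_norm_def S_def ..
  show L0: "Linf_norm b \<ge> 0" unfolding L using Sne by (intro cInf_greatest) (auto simp: S_def)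
  have "AE y in lebesgue. \<bar>b y\<bar> \<le> Linf_norm b + inverse (real (Suc m))" for m
  proof -
    have "Inf S < Linf_norm b + inverse (real (Suc m))" unfolding L by simp
    then obtain C where "C \<in> S" "C < Linf_norm b + inverse (real (Suc m))"
      using cInf_lessD[OF Sne] by blast
    then show ?thesis unfolding S_def by (auto elim: eventually_mono)
  qed
  then have "AE y in lebesgue. \<forall>m. \<bar>b y\<bar> \<le> Linf_norm b + inverse (real (Suc m))"
    by (simp add: AE_all_countable)
  then show "AE y in lebesgue. \<bar>b y\<bar> \<le> Linf_norm b"
  proof eventually_elim
    fix y assume H: "\<forall>m. \<bar>b y\<bar> \<le> Linf_norm b + inverse (real (Suc m))"
    show "\<bar>b y\<bar> \<le> Linf_norm b"
    proof (rule ccontr)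
      assume "\<not> ?thesis"
      then have "0 < \<bar>b y\<bar> - Linf_norm b" by simp
      then obtain m where "inverse (real (Suc m)) < \<bar>b y\<bar> - Linf_norm b"
        using reals_Archimedean by blast
      moreover have "\<bar>b y\<bar> \<le> Linf_norm b + inverse (real (Suc m))" using H by blast
      ultimately show False by linarith
    qed
  qed
qed



theorem lemma4p8:
  fixes \<Omega> :: "'a::euclidean_space \<Rightarrow> real"
    and \<phi> :: "'a \<Rightarrow> real \<Rightarrow> real"
    and s :: nat and \<rho> r R :: real and b :: "'a \<Rightarrow> real" and x :: 'a
  assumes "DIM('a) \<ge> 2"
    and "\<rho> > 0"
    and "locally_integrable_punctured \<Omega>"
    and "homogeneous_deg0 \<Omega>"
    and "integral\<^sup>L sphere_measure \<Omega> = 0"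
    and "admissible_infty \<phi> s"
    and "r > 0"
    and "multiple_of_phi_atom \<phi> s (ball 0 r) b"
    and "R \<ge> 2 * r"
    and "x \<in> ball 0 (2 * R) - ball 0 R"
  shows "mu_rho \<rho> \<Omega> b x \<le> ennreal (L1_sphere_norm \<Omega> * Linf_norm b * (1 / \<rho>) *
           sqrt (ln ((2 * R + r) / (R - r)) +
                 ((2 * R + r) powr \<rho> - (R - r) powr \<rho>)\<^sup>2 / (2 * \<rho> * (2 * R + r) powr (2 * \<rho>))))"
proof -
  note rho = assms(2) and li = assms(3) and hom = assms(4) and r = assms(7) and R = assms(9) and x = assms(10)
  obtain cc a where atom: "phi_atom \<phi> s (ball 0 r) a" and bdef: "b = (\<lambda>x. cc * a x)"
    using assms(8) unfolding multiple_of_phi_atom_def by blast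
  have am: "a \<in> borel_measurable lebesgue" and az: "\<And>y. y \<notin> ball 0 r \<Longrightarrow> a y = 0"
    and aL: "AE y in lebesgue. \<bar>a y\<bar> \<le> 1 / L_phi_norm \<phi> (indicator (ball 0 r))"
    using atom unfolding phi_atom_def by auto
  have bm: "b \<in> borel_measurable lebesgue" unfolding bdef using am by measurable
  have bz: "\<And>y. y \<notin> ball 0 r \<Longrightarrow> b y = 0" unfolding bdef using az by simp
  have "AE y in lebesgue. \<bar>b y\<bar> \<le> \<bar>cc\<bar> * (1 / L_phi_norm \<phi> (indicator (ball 0 r)))"
    using aL
  proof eventually_elim
    fix y assume "\<bar>a y\<bar> \<le> 1 / L_phi_norm \<phi> (indicator (ball 0 r))"
    then have "\<bar>cc\<bar> * \<bar>a y\<bar> \<le> \<bar>cc\<bar> * (1 / L_phi_norm \<phi> (indicator (ball 0 r)))"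
      by (rule mult_left_mono) simp
    then show "\<bar>b y\<bar> \<le> \<bar>cc\<bar> * (1 / L_phi_norm \<phi> (indicator (ball 0 r)))"
      by (simp only: bdef abs_mult)
  qed
  note Lprops = Linf_props[OF this]
  define Lb where "Lb = Linf_norm b"
  have Lb: "Lb \<ge> 0" and bL: "AE y in lebesgue. \<bar>b y\<bar> \<le> Lb" using Lprops unfolding Lb_def by auto
  define L1 where "L1 = L1_sphere_norm \<Omega>"
  have L10: "L1 \<ge> 0" unfolding L1_def sphere_norm(2)[OF li hom] by simp
  define a0 where "a0 = R - r"
  define c where "c = 2 * R + r"
  have a0: "a0 > 0" using r R unfolding a0_def by simp
  have ac: "a0 < c" using r R unfolding a0_def c_def by simp
  define M where "M = Lb * L1 / \<rho>"
  have M0: "M \<ge> 0" unfolding M_def using Lb L10 rho by simp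
  define D where "D = c powr \<rho> - a0 powr \<rho>"
  define Pt where "Pt t = (if a0 < min t c then min t c powr \<rho> - a0 powr \<rho> else 0)" for t
  have Fb: "\<bar>F_rho \<rho> \<Omega> b t x\<bar> \<le> M * Pt t" for t
    using F_bound[OF li hom rho r R x bm bz bL Lb, of t]
    unfolding M_def Pt_def a0_def c_def L1_def by (simp add: field_simps)
  define FT where "FT t = F_rho \<rho> \<Omega> b t x" for t
  have pw: "ennreal ((FT t)\<^sup>2 * t powr (- 2 * \<rho> - 1)) * indicator {0<..} t
     \<le> ennreal (M\<^sup>2 / t) * indicator {a0<..c} t + ennreal (M\<^sup>2 * D\<^sup>2 * t powr (- 2 * \<rho> - 1)) * indicator {c<..} t" for t
  proof (cases "t > 0")
    case False then show ?thesis by simp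
  next
    case True
    have Pt0: "Pt t \<ge> 0" unfolding Pt_def using a0 rho by (auto intro: powr_mono2)
    have F2: "(FT t)\<^sup>2 \<le> M\<^sup>2 * (Pt t)\<^sup>2"
    proof -
      have "(FT t)\<^sup>2 = \<bar>FT t\<bar>\<^sup>2" by simp
      also have "\<dots> \<le> (M * Pt t)\<^sup>2" using Fb[of t] unfolding FT_def by (intro power_mono) auto
      finally show ?thesis by (simp add: power_mult_distrib)
    qed
    have w0: "t powr (- 2 * \<rho> - 1) > 0" using True by simp
    show ?thesis
    proof (cases "t \<le> a0")
      case True
      then have "Pt t = 0" unfolding Pt_def by auto
      then have "(FT t)\<^sup>2 \<le> 0" using F2 by simp
      then have "(FT t)\<^sup>2 = 0" by (intro antisym) auto
      then show ?thesis by simp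
    next
      case False
      note ta = False
      show ?thesis
      proof (cases "t \<le> c")
        case True
        then have P: "Pt t = t powr \<rho> - a0 powr \<rho>" using ta unfolding Pt_def by auto
        have "a0 powr \<rho> \<le> t powr \<rho>" using ta a0 rho by (intro powr_mono2) auto
        then have "0 \<le> Pt t" "Pt t \<le> t powr \<rho>" using P a0 by auto
        then have "(Pt t)\<^sup>2 \<le> (t powr \<rho>)\<^sup>2" by (intro power_mono) auto
        then have "M\<^sup>2 * (Pt t)\<^sup>2 \<le> M\<^sup>2 * (t powr \<rho>)\<^sup>2" by (intro mult_left_mono) auto
        then have "(FT t)\<^sup>2 \<le> M\<^sup>2 * (t powr \<rho>)\<^sup>2" using F2 by linarith
        then have "(FT t)\<^sup>2 * t powr (- 2 * \<rho> - 1) \<le> M\<^sup>2 * (t powr \<rho>)\<^sup>2 * t powr (- 2 * \<rho> - 1)"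
          using w0 by (intro mult_right_mono) auto
        moreover have "(t powr \<rho>)\<^sup>2 * t powr (- 2 * \<rho> - 1) = t powr (-1)"
          using \<open>t > 0\<close> by (simp add: power2_eq_square powr_add[symmetric])
        moreover have "t powr (-1) = 1 / t" using \<open>t > 0\<close> by (simp add: powr_minus_divide)
        ultimately have "(FT t)\<^sup>2 * t powr (- 2 * \<rho> - 1) \<le> M\<^sup>2 * (1 / t)"
          by (simp add: mult.assoc)
        then have "(FT t)\<^sup>2 * t powr (- 2 * \<rho> - 1) \<le> M\<^sup>2 / t" by simp
        then have "ennreal ((FT t)\<^sup>2 * t powr (- 2 * \<rho> - 1)) \<le> ennreal (M\<^sup>2 / t)"
          by (rule ennreal_leI)
        then show ?thesis using True ta \<open>t > 0\<close> by (simp add: indicator_def)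
      next
        case False
        then have P: "Pt t = D" using ta ac unfolding Pt_def D_def by auto
        have "(FT t)\<^sup>2 * t powr (- 2 * \<rho> - 1) \<le> M\<^sup>2 * D\<^sup>2 * t powr (- 2 * \<rho> - 1)"
          using F2 w0 P by (intro mult_right_mono) auto
        then have "ennreal ((FT t)\<^sup>2 * t powr (- 2 * \<rho> - 1)) \<le> ennreal (M\<^sup>2 * D\<^sup>2 * t powr (- 2 * \<rho> - 1))"
          by (rule ennreal_leI)
        then show ?thesis using False ta \<open>t > 0\<close> ac by (simp add: indicator_def)
      qed
    qed
  qed
  define I where "I = (\<integral>\<^sup>+ t\<in>{0<..}. ennreal ((F_rho \<rho> \<Omega> b t x)\<^sup>2 * t powr (- 2 * \<rho> - 1)) \<partial>lborel)"
  have I1: "I \<le> (\<integral>\<^sup>+ t. ennreal (M\<^sup>2 / t) * indicator {a0<..c} t + ennreal (M\<^sup>2 * D\<^sup>2 * t powr (- 2 * \<rho> - 1)) * indicator {c<..} t \<partial>lborel)"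
    unfolding I_def using pw unfolding FT_def by (intro nn_integral_mono) auto
  also have "\<dots> = (\<integral>\<^sup>+ t. ennreal (M\<^sup>2 / t) * indicator {a0<..c} t \<partial>lborel) + (\<integral>\<^sup>+ t. ennreal (M\<^sup>2 * D\<^sup>2 * t powr (- 2 * \<rho> - 1)) * indicator {c<..} t \<partial>lborel)"
    by (rule nn_integral_add) auto
  also have "(\<integral>\<^sup>+ t. ennreal (M\<^sup>2 / t) * indicator {a0<..c} t \<partial>lborel) = ennreal (M\<^sup>2 * ln c - M\<^sup>2 * ln a0)"
  proof (rule nn_FTC_Ioc)
    show "a0 \<le> c" using ac by simp
    fix t assume t: "t \<in> {a0..c}"
    then have "t > 0" using a0 by auto
    show "((\<lambda>t. M\<^sup>2 * ln t) has_real_derivative M\<^sup>2 / t) (at t within {a0..c})"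
      by (rule has_field_derivative_at_within) (use \<open>t > 0\<close> in \<open>auto intro!: derivative_eq_intros simp: field_simps\<close>)
    show "0 \<le> M\<^sup>2 / t" using \<open>t > 0\<close> by simp
  qed
  also have "(\<integral>\<^sup>+ t. ennreal (M\<^sup>2 * D\<^sup>2 * t powr (- 2 * \<rho> - 1)) * indicator {c<..} t \<partial>lborel)
      = (\<integral>\<^sup>+ t. ennreal (M\<^sup>2 * D\<^sup>2 * t powr (- 2 * \<rho> - 1)) * indicator {c..} t \<partial>lborel)"
    by (intro nn_integral_cong_AE) (use AE_lborel_singleton[of c] in \<open>eventually_elim, auto simp: indicator_def\<close>)
  also have "\<dots> = ennreal (0 - (- (M\<^sup>2 * D\<^sup>2) / (2 * \<rho>)) * c powr (- 2 * \<rho>))"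
  proof (rule nn_integral_FTC_atLeast)
    show "(\<lambda>t. M\<^sup>2 * D\<^sup>2 * t powr (- 2 * \<rho> - 1)) \<in> borel_measurable borel" by measurable
    fix t assume t: "c \<le> t"
    then have "t > 0" using ac a0 by auto
    show "((\<lambda>t. (- (M\<^sup>2 * D\<^sup>2) / (2 * \<rho>)) * t powr (- 2 * \<rho>)) has_real_derivative M\<^sup>2 * D\<^sup>2 * t powr (- 2 * \<rho> - 1)) (at t)"
      using \<open>t > 0\<close> rho by (auto intro!: derivative_eq_intros simp: field_simps)
    show "0 \<le> M\<^sup>2 * D\<^sup>2 * t powr (- 2 * \<rho> - 1)" by simp
  next
    have "((\<lambda>t::real. t powr (- 2 * \<rho>)) \<longlongrightarrow> 0) at_top"
      using rho by (intro tendsto_neg_powr filterlim_ident) auto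
    then have "((\<lambda>t. (- (M\<^sup>2 * D\<^sup>2) / (2 * \<rho>)) * t powr (- 2 * \<rho>)) \<longlongrightarrow> (- (M\<^sup>2 * D\<^sup>2) / (2 * \<rho>)) * 0) at_top"
      by (intro tendsto_mult tendsto_const)
    then show "((\<lambda>t. (- (M\<^sup>2 * D\<^sup>2) / (2 * \<rho>)) * t powr (- 2 * \<rho>)) \<longlongrightarrow> 0) at_top" by simp
  qed
  finally have I2: "I \<le> ennreal (M\<^sup>2 * ln c - M\<^sup>2 * ln a0) + ennreal (0 - (- (M\<^sup>2 * D\<^sup>2) / (2 * \<rho>)) * c powr (- 2 * \<rho>))" .
  define Q where "Q = ln ((2 * R + r) / (R - r)) +
                 ((2 * R + r) powr \<rho> - (R - r) powr \<rho>)\<^sup>2 / (2 * \<rho> * (2 * R + r) powr (2 * \<rho>))"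
  have lnc: "ln c - ln a0 \<ge> 0" using a0 ac by simp
  have Qeq: "M\<^sup>2 * Q = (M\<^sup>2 * ln c - M\<^sup>2 * ln a0) + (0 - (- (M\<^sup>2 * D\<^sup>2) / (2 * \<rho>)) * c powr (- 2 * \<rho>))"
    unfolding Q_def D_def a0_def[symmetric] c_def[symmetric]
    using a0 ac rho by (simp add: ln_div powr_minus_divide field_simps)
  have MQ0: "M\<^sup>2 * Q \<ge> 0"
    unfolding Qeq using lnc rho by (auto intro!: add_nonneg_nonneg mult_nonneg_nonneg divide_nonneg_nonneg mult_left_mono)
  have "I \<le> ennreal (M\<^sup>2 * Q)"
  proof -
    have "ennreal (M\<^sup>2 * ln c - M\<^sup>2 * ln a0) + ennreal (0 - (- (M\<^sup>2 * D\<^sup>2) / (2 * \<rho>)) * c powr (- 2 * \<rho>))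
        = ennreal (M\<^sup>2 * Q)"
      unfolding Qeq using lnc rho by (subst ennreal_plus) (auto intro!: mult_nonneg_nonneg divide_nonneg_nonneg mult_left_mono)
    then show ?thesis using I2 by simp
  qed
  then have Ifin: "I \<noteq> \<infinity>" by (auto simp: top_unique)
  have "enn2real I \<le> M\<^sup>2 * Q"
  proof -
    have "enn2real I \<le> enn2real (ennreal (M\<^sup>2 * Q))"
      using \<open>I \<le> ennreal (M\<^sup>2 * Q)\<close> by (intro enn2real_mono) auto
    also have "\<dots> \<le> M\<^sup>2 * Q"
      using MQ0 by simp
    finally show ?thesis .
  qed
  then have "sqrt (enn2real I) \<le> sqrt (M\<^sup>2 * Q)" by simp
  also have "sqrt (M\<^sup>2 * Q) = M * sqrt Q" using M0 by (simp add: real_sqrt_mult)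
  finally have sq: "sqrt (enn2real I) \<le> M * sqrt Q" .
  have "mu_rho \<rho> \<Omega> b x = ennreal (sqrt (enn2real I))"
    unfolding mu_rho_def Let_def I_def[symmetric] using Ifin by simp
  also have "\<dots> \<le> ennreal (M * sqrt Q)" using sq by (rule ennreal_leI)
  also have "M * sqrt Q = L1_sphere_norm \<Omega> * Linf_norm b * (1 / \<rho>) * sqrt Q"
    unfolding M_def L1_def Lb_def by simp
  finally show ?thesis unfolding Q_def .
qed


end
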